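(* Suppose $V:\mathbb R^2\to\mathbb R$ satisfies $(V_0)$ and $(V_2)$. Then $(\nabla V(x),x)\ge0$ for all $x\in\mathbb R^2$.
   Context: Condition $(V_0)$: $V\in L^1_{loc}(\mathbb R^2)$, $V_0:=\inf_{\mathbb R^2}V>0$, and the Lebesgue measure of $\{x\in\mathbb R^2: V(x)\le M\}$ is finite for every $M>0$. Condition $(V_2)$: $V\in C^1(\mathbb R^2,\mathbb R)$ and, with $\mathcal V(x):=V(x)-\frac12(\nabla V(x),x)$, for every $x\in\mathbb R^2$ the function $t\mapsto\mathcal V(tx)$ is nondecreasing on $(0,\infty)$. *)

theory Defs
  imports "HOL-Analysis.Analysis"
begin

definition grad :: "(real^2 \<Rightarrow> real) \<Rightarrow> real^2 \<Rightarrow> real^2" where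
  "grad V x = (\<chi> i. frechet_derivative V (at x) (axis i 1))"

definition C1 :: "(real^2 \<Rightarrow> real) \<Rightarrow> bool" where
  "C1 V \<longleftrightarrow> (\<forall>x. V differentiable (at x)) \<and> continuous_on UNIV (grad V)"

definition cond_V0 :: "(real^2 \<Rightarrow> real) \<Rightarrow> bool" where
  "cond_V0 V \<longleftrightarrow>
     (\<forall>K. compact K \<longrightarrow> set_integrable lebesgue K V)
   \<and> bdd_below (range V) \<and> (INF x. V x) > 0
   \<and> (\<forall>M>0. {x. V x \<le> M} \<in> sets lebesgue \<and> emeasure lebesgue {x. V x \<le> M} < \<infinity>)"

definition calV :: "(real^2 \<Rightarrow> real) \<Rightarrow> real^2 \<Rightarrow> real" where
  "calV V x = V x - 1/2 * (grad V x \<bullet> x)"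

definition cond_V2 :: "(real^2 \<Rightarrow> real) \<Rightarrow> bool" where
  "cond_V2 V \<longleftrightarrow> C1 V \<and> (\<forall>x. mono_on {0<..} (\<lambda>t. calV V (t *\<^sub>R x)))"

end

theory Submission imports Defs begin
lemma grad_inner:
  fixes V :: "real^2 \<Rightarrow> real"
  assumes "V differentiable (at y)"
  shows "(V has_derivative (\<lambda>h. grad V y \<bullet> h)) (at y)"
proof -
  let ?D = "frechet_derivative V (at y)"
  have d: "(V has_derivative ?D) (at y)" using assms frechet_derivative_works by blast
  have l: "linear ?D" using d has_derivative_linear by blast
  have "?D h = grad V y \<bullet> h" for h
  proof -
    have "h = (\<Sum>i\<in>UNIV. h$i *\<^sub>R axis i 1)"
      unfolding vec_eq_iff
    proof
      fix i
      have "(\<Sum>x\<in>UNIV. h$x *\<^sub>R axis x (1::real)) $ i = (\<Sum>x\<in>UNIV. (h$x *\<^sub>R axis x (1::real)) $ i)" by (rule sum_component)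
      also have "\<dots> = (\<Sum>x\<in>UNIV. if x = i then h$x else 0)" by (intro sum.cong) (auto simp: axis_def)
      also have "\<dots> = h$i" by (simp add: sum.delta)
      finally show "h $ i = (\<Sum>x\<in>UNIV. h$x *\<^sub>R axis x (1::real)) $ i" by simp
    qed
    hence "?D h = (\<Sum>i\<in>UNIV. h$i * ?D (axis i 1))"
      using linear_sum[OF l, of "\<lambda>i. h$i *\<^sub>R axis i 1" UNIV] linear_scale[OF l] by simp
    also have "\<dots> = grad V y \<bullet> h" by (simp add: grad_def inner_vec_def mult.commute)
    finally show ?thesis .
  qed
  hence "?D = (\<lambda>h. grad V y \<bullet> h)" by (rule ext)
  thus ?thesis using d by simp
qed

theorem lemma5p1:
  fixes V :: "real^2 \<Rightarrow> real"
  assumes "cond_V0 V" and "cond_V2 V"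
  shows "\<forall>x. grad V x \<bullet> x \<ge> 0"
proof (rule allI, rule ccontr)
  fix x0 :: "real^2"
  assume "\<not> grad V x0 \<bullet> x0 \<ge> 0"
  hence aneg: "grad V x0 \<bullet> x0 < 0" by simp
  define a where "a = grad V x0 \<bullet> x0"
  have an: "a < 0" using aneg a_def by simp
  from assms(1) obtain m where m: "\<And>y. m \<le> V y"
    unfolding cond_V0_def bdd_below_def by auto
  have diff: "\<And>y. V differentiable (at y)" and mon: "\<And>x. mono_on {0<..} (\<lambda>t. calV V (t *\<^sub>R x))"
    using assms(2) unfolding cond_V2_def C1_def by auto
  define f where "f t = V (t *\<^sub>R x0)" for t
  define c where "c = calV V x0"
  have c_eq: "c = f 1 - a/2" by (simp add: c_def calV_def f_def a_def)
  have fder: "(f has_real_derivative (grad V (t *\<^sub>R x0) \<bullet> x0)) (at t)" for t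
  proof -
    have "((\<lambda>t. V (t *\<^sub>R x0)) has_derivative (\<lambda>h. grad V (t *\<^sub>R x0) \<bullet> (h *\<^sub>R x0))) (at t)"
      by (rule has_derivative_compose[OF _ grad_inner[OF diff]]) (auto intro!: derivative_eq_intros)
    thus ?thesis unfolding has_field_derivative_def f_def
      by (simp add: mult.commute[of _ "grad V (t *\<^sub>R x0) \<bullet> x0"])
  qed
  have cal: "c \<le> f t - t/2 * (grad V (t *\<^sub>R x0) \<bullet> x0)" if "t \<ge> 1" for t
  proof -
    have "calV V (1 *\<^sub>R x0) \<le> calV V (t *\<^sub>R x0)"
      using mon[of x0] that unfolding mono_on_def by (metis greaterThan_iff less_le_trans zero_less_one)
    thus ?thesis by (simp add: c_def calV_def f_def)
  qed
  define k where "k t = (f t - c) / t^2" for t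
  have kdec: "k t \<le> k 1" if "t \<ge> 1" for t
  proof (rule DERIV_nonpos_imp_nonincreasing[OF that])
    fix s assume s1: "1 \<le> s" and s2: "s \<le> t"
    have s: "1 \<le> s \<and> s \<le> t" using s1 s2 by simp
    let ?g = "grad V (s *\<^sub>R x0) \<bullet> x0"
    have "(k has_real_derivative ((?g * s^2 - (f s - c) * (2 * s)) / (s^2)^2)) (at s)"
      unfolding k_def using s
      by (auto intro!: derivative_eq_intros fder simp: power2_eq_square)
    moreover have "(?g * s^2 - (f s - c) * (2 * s)) / (s^2)^2 \<le> 0"
    proof -
      have "?g * s^2 - (f s - c) * (2 * s) = 2 * s * (s/2 * ?g - (f s - c))"
        by (simp add: algebra_simps power2_eq_square)
      also have "\<dots> \<le> 0" using cal[of s] s by (intro mult_nonneg_nonpos) auto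
      finally show ?thesis by (intro divide_nonpos_nonneg) auto
    qed
    ultimately show "\<exists>y. (k has_real_derivative y) (at s) \<and> y \<le> 0" by blast
  qed
  define t where "t = max 1 (2 * (c - m + 1) / (- a))"
  have t1: "t \<ge> 1" by (simp add: t_def)
  have "(f t - c) / t^2 \<le> a/2" using kdec[OF t1] by (simp add: k_def c_eq)
  hence "f t - c \<le> t^2 * (a/2)" using t1 by (simp add: divide_le_eq mult.commute)
  also have "t^2 * (a/2) \<le> t * (a/2)"
  proof -
    have "t \<le> t^2" using t1 by (simp add: power2_eq_square)
    thus ?thesis using an by (intro mult_right_mono_neg) auto
  qed
  also have "t * (a/2) \<le> -(c - m + 1)"
  proof -
    have "2 * (c - m + 1) / (- a) \<le> t" by (simp add: t_def)
    hence "2 * (c - m + 1) \<le> t * (-a)" using an pos_divide_le_eq[of "-a" "2 * (c - m + 1)" t] by simp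
    thus ?thesis by simp
  qed
  finally have "f t \<le> m - 1" by simp
  moreover have "m \<le> f t" by (simp add: f_def m)
  ultimately show False by simp
qed

end
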